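(* Let $M^*$ be any maximum-weight perfect matching of $G$, and for $b\in B$ let $M^*(b)$ be the item matched to $b$. Then for any agents $i,j$ and any $c\in[m-1]$, $v_{i,M^*(b_{(i,c)})}\ge v_{i,M^*(b_{(j,c+1)})}$ (dummy items having value $0$ for every agent).
   Context: Setting: $n$ agents, $m$ real items $\mathcal M$, restricted additive valuations: there are values $v(g)>0$ with $v_{i,g}\in\{0,v(g)\}$ and $v_i(S)=\sum_{g\in S}v_{i,g}$; every real item is valued positively by at least one agent. Let $u_1>u_2>\dots>u_t$ be the distinct values in $\{v(g):g\in\mathcal M\}$ and $\mathcal M_f=\{g:v(g)=u_f\}$. Add a set $\mathcal M_d$ of $mn-m$ dummy items valued $0$ by all agents. The bipartite graph $G$ has left side $A=\{a_g: g\in\mathcal M\cup\mathcal M_d\}$ ($mn$ vertices) and right side $B=\{b_{(i,c)}: i\in[n], c\in[m]\}$; the set $\mathcal N_c=\{b_{(i,c)}:i\in[n]\}$ is called bucket $c$. Edges: for each real $g\in\mathcal M_f$, each agent $i$ with $v_{i,g}>0$ and each $c\in[m]$, an edge $(a_g,b_{(i,c)})$ of weight $-m^{t-f}\cdot c$; for each dummy $g$ and all $i,c$, an edge $(a_g,b_{(i,c)})$ of weight $0$; no other edges. *)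

theory Defs
  imports Complex_Main 
begin

(* Items (left vertices a_g identified with g): real items are 0..<m,
   dummy items are m..<m*n (there are m*n - m of them).
   Right vertices b_(i,c) are pairs (i,c). *)

definition agents :: "nat \<Rightarrow> nat set" where
  "agents n = {1..n}"

definition buckets :: "nat \<Rightarrow> nat set" where
  "buckets m = {1..m}"

definition real_items :: "nat \<Rightarrow> nat set" where
  "real_items m = {..<m}"

definition dummy_items :: "nat \<Rightarrow> nat \<Rightarrow> nat set" where
  "dummy_items n m = {m..<m*n}"

definition left_side :: "nat \<Rightarrow> nat \<Rightarrow> nat set" where
  "left_side n m = real_items m \<union> dummy_items n m"

definition right_side :: "nat \<Rightarrow> nat \<Rightarrow> (nat \<times> nat) set" where
  "right_side n m = agents n \<times> buckets m"

definition num_values :: "(nat \<Rightarrow> real) \<Rightarrow> nat \<Rightarrow> nat" where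
  "num_values v m = card (v ` real_items m)"

(* index f with v g = u_f, where u_1 > u_2 > ... > u_t *)
definition value_rank :: "(nat \<Rightarrow> real) \<Rightarrow> nat \<Rightarrow> nat \<Rightarrow> nat" where
  "value_rank v m g = card {u \<in> v ` real_items m. v g \<le> u}"

definition edges :: "nat \<Rightarrow> nat \<Rightarrow> (nat \<Rightarrow> nat \<Rightarrow> real) \<Rightarrow> (nat \<times> (nat \<times> nat)) set" where
  "edges n m val = {(g, (i, c)). i \<in> agents n \<and> c \<in> buckets m \<and>
      ((g \<in> real_items m \<and> val i g > 0) \<or> g \<in> dummy_items n m)}"

definition edge_weight :: "nat \<Rightarrow> (nat \<Rightarrow> real) \<Rightarrow> nat \<times> (nat \<times> nat) \<Rightarrow> real" where
  "edge_weight m v e = (case e of (g, (i, c)) \<Rightarrow>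
      (if g \<in> real_items m
       then - (real m ^ (num_values v m - value_rank v m g)) * real c
       else 0))"

definition perfect_matching ::
  "('a \<times> 'b) set \<Rightarrow> 'a set \<Rightarrow> 'b set \<Rightarrow> ('a \<times> 'b) set \<Rightarrow> bool" where
  "perfect_matching E A B M \<longleftrightarrow> M \<subseteq> E \<and>
     (\<forall>a\<in>A. \<exists>!b. (a, b) \<in> M) \<and> (\<forall>b\<in>B. \<exists>!a. (a, b) \<in> M)"

definition max_weight_perfect_matching ::
  "('a \<times> 'b) set \<Rightarrow> 'a set \<Rightarrow> 'b set \<Rightarrow> ('a \<times> 'b \<Rightarrow> real) \<Rightarrow> ('a \<times> 'b) set \<Rightarrow> bool" where
  "max_weight_perfect_matching E A B w M \<longleftrightarrow> perfect_matching E A B M \<and>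
     (\<forall>M'. perfect_matching E A B M' \<longrightarrow> sum w M' \<le> sum w M)"

definition matched_to :: "('a \<times> 'b) set \<Rightarrow> 'b \<Rightarrow> 'a" where
  "matched_to M b = (THE a. (a, b) \<in> M)"

end

theory Submission
  imports Defs
begin

lemma swap_improve:
  fixes M :: "('a \<times> 'b) set" and p :: "'b \<Rightarrow> 'b" and w :: "'a \<times> 'b \<Rightarrow> real"
  assumes pm: "perfect_matching E A B M" and fin: "finite M" and finB: "finite B"
    and inj: "inj p" and img: "p ` B \<subseteq> B"
    and edg: "\<And>a b. (a,b) \<in> M \<Longrightarrow> (a, p b) \<in> E"
    and gain: "(\<Sum>e\<in>M. w (fst e, p (snd e)) - w e) > 0"
  shows "\<not> max_weight_perfect_matching E A B w M"
proof
  assume mx: "max_weight_perfect_matching E A B w M"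
  define f where "f = (\<lambda>e::('a\<times>'b). (fst e, p (snd e)))"
  have injf: "inj f" using inj unfolding f_def inj_def by auto
  have imgB: "p ` B = B" using endo_inj_surj[OF finB img] inj by (simp add: inj_on_def inj_def)
  have "perfect_matching E A B (f ` M)"
    unfolding perfect_matching_def
  proof (intro conjI ballI)
    show "f ` M \<subseteq> E" using edg unfolding f_def by auto
  next
    fix a assume a: "a \<in> A"
    then obtain b0 where b0: "(a,b0) \<in> M" and u: "\<And>b. (a,b) \<in> M \<Longrightarrow> b = b0"
      using pm unfolding perfect_matching_def by metis
    show "\<exists>!b. (a, b) \<in> f ` M"
    proof (rule ex1I[of _ "p b0"])
      show "(a, p b0) \<in> f ` M" using b0 unfolding f_def by force
    next
      fix b assume "(a,b) \<in> f ` M"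
      then obtain b1 where "(a,b1) \<in> M" "b = p b1" unfolding f_def by auto
      then show "b = p b0" using u by auto
    qed
  next
    fix b assume b: "b \<in> B"
    then obtain b0 where b0B: "b0 \<in> B" and bb: "b = p b0" using imgB by auto
    then obtain a0 where a0: "(a0,b0) \<in> M" and u: "\<And>a. (a,b0) \<in> M \<Longrightarrow> a = a0"
      using pm unfolding perfect_matching_def by metis
    show "\<exists>!a. (a, b) \<in> f ` M"
    proof (rule ex1I[of _ a0])
      show "(a0, b) \<in> f ` M" using a0 bb unfolding f_def by force
    next
      fix a assume "(a,b) \<in> f ` M"
      then obtain b1 where "(a,b1) \<in> M" "b = p b1" unfolding f_def by auto
      moreover then have "b1 = b0" using bb inj by (auto simp: inj_def)
      ultimately show "a = a0" using u by auto
    qed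
  qed
  then have le: "sum w (f ` M) \<le> sum w M" using mx unfolding max_weight_perfect_matching_def by blast
  have "sum w (f ` M) = sum (w \<circ> f) M" using injf by (meson inj_on_subset subset_UNIV sum.reindex)
  then have "sum w (f ` M) - sum w M = (\<Sum>e\<in>M. w (fst e, p (snd e)) - w e)"
    by (simp add: sum_subtractf f_def)
  then show False using le gain by linarith
qed


theorem mainTheorem9:
  fixes n m :: nat
    and v :: "nat \<Rightarrow> real"
    and val :: "nat \<Rightarrow> nat \<Rightarrow> real"
    and Mstar :: "(nat \<times> (nat \<times> nat)) set"
  assumes v_pos: "\<And>g. g \<in> real_items m \<Longrightarrow> v g > 0"
    and restricted: "\<And>i g. i \<in> agents n \<Longrightarrow> g \<in> real_items m \<Longrightarrow> val i g = 0 \<or> val i g = v g"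
    and dummy_zero: "\<And>i g. i \<in> agents n \<Longrightarrow> g \<in> dummy_items n m \<Longrightarrow> val i g = 0"
    and valued: "\<And>g. g \<in> real_items m \<Longrightarrow> \<exists>i \<in> agents n. val i g > 0"
    and opt: "max_weight_perfect_matching (edges n m val) (left_side n m) (right_side n m)
               (edge_weight m v) Mstar"
    and i: "i \<in> agents n" and j: "j \<in> agents n"
    and c: "c \<in> {1..m-1}"
  shows "val i (matched_to Mstar (i, c)) \<ge> val i (matched_to Mstar (j, c + 1))"
proof (rule ccontr)
  assume neg: "\<not> val i (matched_to Mstar (i, c)) \<ge> val i (matched_to Mstar (j, c + 1))"
  define M where "M = Mstar"
  define R where "R = right_side n m"
  define L where "L = left_side n m"
  define E where "E = (\<lambda>x. real m ^ (num_values v m - value_rank v m x))"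
  have m2: "m \<ge> 2" using c by auto
  have pm: "perfect_matching (edges n m val) L R M"
    using opt unfolding max_weight_perfect_matching_def M_def L_def R_def by blast
  have ME: "\<And>e. e \<in> M \<Longrightarrow> e \<in> edges n m val" using pm unfolding perfect_matching_def by blast
  have edge_iff: "\<And>a i c. (a,(i,c)) \<in> edges n m val \<longleftrightarrow> i \<in> agents n \<and> c \<in> buckets m \<and>
      ((a \<in> real_items m \<and> val i a > 0) \<or> a \<in> dummy_items n m)"
    unfolding edges_def by auto
  have rd: "real_items m \<inter> dummy_items n m = {}" unfolding real_items_def dummy_items_def by auto
  have Mleft: "\<And>a b. (a,b) \<in> M \<Longrightarrow> a \<in> L"
    using ME unfolding edges_def L_def left_side_def by auto
  have Mright: "\<And>a b. (a,b) \<in> M \<Longrightarrow> b \<in> R"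
    using ME unfolding edges_def R_def right_side_def by auto
  have mt: "\<And>b. b \<in> R \<Longrightarrow> (matched_to M b, b) \<in> M"
  proof -
    fix b assume "b \<in> R"
    then have "\<exists>!a. (a,b) \<in> M" using pm unfolding perfect_matching_def by blast
    then show "(matched_to M b, b) \<in> M" unfolding matched_to_def by (rule theI')
  qed
  have mu: "\<And>a b. (a,b) \<in> M \<Longrightarrow> matched_to M b = a"
  proof -
    fix a b assume ab: "(a,b) \<in> M"
    then have "\<exists>!a. (a,b) \<in> M" using pm Mright unfolding perfect_matching_def by blast
    then show "matched_to M b = a" unfolding matched_to_def using ab by (metis the_equality)
  qed
  have au: "\<And>a b b'. (a,b) \<in> M \<Longrightarrow> (a,b') \<in> M \<Longrightarrow> b = b'"
  proof -
    fix a b b' assume "(a,b) \<in> M" "(a,b') \<in> M"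
    moreover have "\<exists>!b. (a,b) \<in> M" using pm Mleft[OF \<open>(a,b) \<in> M\<close>] unfolding perfect_matching_def by blast
    ultimately show "b = b'" by blast
  qed
  have finM: "finite M"
  proof (rule finite_subset)
    show "M \<subseteq> L \<times> R" using Mleft Mright by auto
    show "finite (L \<times> R)" unfolding L_def R_def left_side_def right_side_def real_items_def
        dummy_items_def agents_def buckets_def by auto
  qed
  have finR: "finite R" unfolding R_def right_side_def agents_def buckets_def by auto
  have icR: "(i,c) \<in> R" and jcR: "(j,c+1) \<in> R"
    using i j c unfolding R_def right_side_def buckets_def by auto
  define g where "g = matched_to M (i,c)"
  define h where "h = matched_to M (j,c+1)"
  have gM: "(g,(i,c)) \<in> M" using mt[OF icR] g_def by simp
  have hM: "(h,(j,c+1)) \<in> M" using mt[OF jcR] h_def by simp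
  have gL: "g \<in> L" using Mleft[OF gM] .
  have hL: "h \<in> L" using Mleft[OF hM] .
  have neg': "val i g < val i h" using neg unfolding g_def h_def M_def by simp
  have gE: "(g,(i,c)) \<in> edges n m val" using ME[OF gM] .
  have vg0: "val i g \<ge> 0" using gE dummy_zero[OF i, of g] unfolding edge_iff by auto
  have hreal: "h \<in> real_items m"
  proof (rule ccontr)
    assume "h \<notin> real_items m"
    then have "h \<in> dummy_items n m" using hL unfolding L_def left_side_def by auto
    then show False using dummy_zero[OF i] neg' vg0 by fastforce
  qed
  have vih: "val i h = v h" using restricted[OF i hreal] neg' vg0 by auto
  have vihpos: "val i h > 0" using neg' vg0 by linarith
  have Epos: "\<And>x. E x > 0" unfolding E_def using m2 by auto
  have w_real: "\<And>x a b. x \<in> real_items m \<Longrightarrow> edge_weight m v (x,(a,b)) = - E x * real b"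
    unfolding edge_weight_def E_def by simp
  have w_dummy: "\<And>x a b. x \<notin> real_items m \<Longrightarrow> edge_weight m v (x,(a,b)) = 0"
    unfolding edge_weight_def by simp
  have Ebig: "E h \<ge> real m * E g" if greal: "g \<in> real_items m"
  proof -
    have vig: "val i g = v g" using gE rd greal restricted[OF i greal] unfolding edge_iff by auto
    have lt: "v g < v h" using vig vih neg' by simp
    let ?V = "v ` real_items m"
    have fin: "finite ?V" unfolding real_items_def by auto
    have sub: "{u \<in> ?V. v h \<le> u} \<subset> {u \<in> ?V. v g \<le> u}"
    proof
      show "{u \<in> ?V. v h \<le> u} \<subseteq> {u \<in> ?V. v g \<le> u}" using lt by auto
      have "v g \<in> {u \<in> ?V. v g \<le> u}" using greal by auto
      moreover have "v g \<notin> {u \<in> ?V. v h \<le> u}" using lt by auto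
      ultimately show "{u \<in> ?V. v h \<le> u} \<noteq> {u \<in> ?V. v g \<le> u}" by blast
    qed
    have r1: "value_rank v m h < value_rank v m g"
      unfolding value_rank_def using psubset_card_mono[OF _ sub] fin by auto
    have r2: "value_rank v m g \<le> num_values v m"
      unfolding value_rank_def num_values_def using fin by (intro card_mono) auto
    have ex: "num_values v m - value_rank v m h \<ge> Suc (num_values v m - value_rank v m g)"
      using r1 r2 by linarith
    have "real m * E g = real m ^ Suc (num_values v m - value_rank v m g)" unfolding E_def by simp
    also have "\<dots> \<le> E h" unfolding E_def using ex m2 by (intro power_increasing) auto
    finally show ?thesis .
  qed
  show False
  proof (cases "g \<notin> real_items m \<or> val j g > 0")
    case True
    define p where "p = (\<lambda>x. if x = (i,c) then (j,c+1) else if x = (j,c+1) then (i,c) else x)"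
    have ne: "(i,c) \<noteq> (j,c+1)" by simp
    have injp: "inj p" unfolding p_def inj_def by auto
    have imgp: "p ` R \<subseteq> R" using icR jcR unfolding p_def by auto
    have edg: "(a, p b) \<in> edges n m val" if ab: "(a,b) \<in> M" for a b
    proof -
      consider "b = (i,c)" | "b = (j,c+1)" | "b \<noteq> (i,c) \<and> b \<noteq> (j,c+1)" by blast
      then show ?thesis
      proof cases
        case 1
        then have "a = g" using mu[OF ab] g_def by simp
        moreover have "g \<in> dummy_items n m \<or> (g \<in> real_items m \<and> val j g > 0)"
          using True gL unfolding L_def left_side_def by auto
        ultimately show ?thesis using 1 j c unfolding p_def edges_def buckets_def by auto
      next
        case 2
        then have "a = h" using mu[OF ab] h_def by simp
        then show ?thesis using 2 i c hreal vihpos unfolding p_def edges_def buckets_def by auto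
      next
        case 3
        then show ?thesis using ME[OF ab] unfolding p_def by (cases b) auto
      qed
    qed
    let ?t = "\<lambda>e. edge_weight m v (fst e, p (snd e)) - edge_weight m v e"
    have "(\<Sum>e\<in>M. ?t e) = (\<Sum>e\<in>{(g,(i,c)),(h,(j,c+1))}. ?t e)"
    proof (rule sum.mono_neutral_right[OF finM])
      show "{(g,(i,c)),(h,(j,c+1))} \<subseteq> M" using gM hM by auto
      show "\<forall>e\<in>M - {(g,(i,c)),(h,(j,c+1))}. ?t e = 0"
      proof
        fix e assume e: "e \<in> M - {(g,(i,c)),(h,(j,c+1))}"
        obtain a b where ab: "e = (a,b)" by (cases e) blast
        have "b \<noteq> (i,c)" using e mu[of a b] g_def ab by auto
        moreover have "b \<noteq> (j,c+1)" using e mu[of a b] h_def ab by auto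
        ultimately show "?t e = 0" using ab unfolding p_def by simp
      qed
    qed
    also have "\<dots> = ?t (g,(i,c)) + ?t (h,(j,c+1))" using ne by simp
    also have "\<dots> = (if g \<in> real_items m then - E g else 0) + E h"
      using hreal ne by (auto simp: p_def w_real w_dummy algebra_simps)
    finally have eq: "(\<Sum>e\<in>M. ?t e) = (if g \<in> real_items m then - E g else 0) + E h" .
    have "(if g \<in> real_items m then - E g else 0) + E h > 0"
    proof (cases "g \<in> real_items m")
      case True
      have "E h \<ge> real m * E g" using Ebig True by blast
      moreover have "real m * E g \<ge> 2 * E g" using m2 Epos[of g] by (intro mult_right_mono) auto
      ultimately show ?thesis using True Epos[of g] by (simp; linarith)
    qed (use Epos in auto)
    then have "\<not> max_weight_perfect_matching (edges n m val) L R (edge_weight m v) M"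
      using swap_improve[OF pm finM finR injp imgp edg] eq by auto
    then show False using opt unfolding M_def L_def R_def by blast
  next
    case False
    then have greal: "g \<in> real_items m" and vjg: "\<not> val j g > 0" by auto
    have vig: "val i g > 0" using gE rd greal unfolding edge_iff by auto
    have ij: "i \<noteq> j" using vig vjg by auto
    have "\<exists>c' \<in> buckets m. matched_to M (i,c') \<notin> real_items m"
    proof (rule ccontr)
      assume "\<not> ?thesis"
      then have allr: "\<And>c'. c' \<in> buckets m \<Longrightarrow> matched_to M (i,c') \<in> real_items m" by blast
      let ?F = "\<lambda>c'. matched_to M (i,c')"
      have cR: "\<And>c'. c' \<in> buckets m \<Longrightarrow> (i,c') \<in> R" using i unfolding R_def right_side_def by auto
      have inj: "inj_on ?F (buckets m)"
      proof (rule inj_onI)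
        fix x y assume x: "x \<in> buckets m" and y: "y \<in> buckets m" and e: "?F x = ?F y"
        have "(?F x, (i,x)) \<in> M" using mt[OF cR[OF x]] .
        moreover have "(?F x, (i,y)) \<in> M" using mt[OF cR[OF y]] e by simp
        ultimately show "x = y" using au by blast
      qed
      have "?F ` buckets m \<subseteq> real_items m - {h}"
      proof
        fix a assume "a \<in> ?F ` buckets m"
        then obtain x where x: "x \<in> buckets m" and a: "a = ?F x" by auto
        have "(a,(i,x)) \<in> M" using mt[OF cR[OF x]] a by simp
        moreover have "a \<noteq> h"
        proof
          assume "a = h"
          then have "(h,(i,x)) \<in> M" using \<open>(a,(i,x)) \<in> M\<close> by simp
          then show False using au[OF hM] ij by blast
        qed
        ultimately show "a \<in> real_items m - {h}" using allr x a by auto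
      qed
      then have "card (buckets m) \<le> card (real_items m - {h})"
        using inj by (intro card_inj_on_le) (auto simp: real_items_def)
      then show False using hreal unfolding buckets_def real_items_def by auto
    qed
    then obtain c' where c'B: "c' \<in> buckets m" and dnr: "matched_to M (i,c') \<notin> real_items m" by blast
    define d where "d = matched_to M (i,c')"
    have c'R: "(i,c') \<in> R" using i c'B unfolding R_def right_side_def by auto
    have dM: "(d,(i,c')) \<in> M" using mt[OF c'R] d_def by simp
    have ddum: "d \<in> dummy_items n m" using Mleft[OF dM] dnr d_def unfolding L_def left_side_def by auto
    have n1: "(i,c) \<noteq> (i,c')" using dnr greal g_def d_def by auto
    have n2: "(i,c') \<noteq> (j,c+1)" using ij by simp
    have n3: "(i,c) \<noteq> (j,c+1)" by simp
    define p where "p = (\<lambda>x. if x = (j,c+1) then (i,c) else if x = (i,c) then (i,c')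
                               else if x = (i,c') then (j,c+1) else x)"
    have injp: "inj p" unfolding p_def inj_def using n1 n2 n3 by auto
    have imgp: "p ` R \<subseteq> R" using icR jcR c'R unfolding p_def by auto
    have edg: "(a, p b) \<in> edges n m val" if ab: "(a,b) \<in> M" for a b
    proof -
      consider "b = (i,c)" | "b = (j,c+1)" | "b = (i,c')" |
        "b \<noteq> (i,c) \<and> b \<noteq> (j,c+1) \<and> b \<noteq> (i,c')" by blast
      then show ?thesis
      proof cases
        case 1
        then have "a = g" using mu[OF ab] g_def by simp
        then show ?thesis using 1 i c'B greal vig n1 n3 unfolding p_def edges_def by auto
      next
        case 2
        then have "a = h" using mu[OF ab] h_def by simp
        then show ?thesis using 2 i c hreal vihpos unfolding p_def edges_def buckets_def by auto
      next
        case 3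
        then have "a = d" using mu[OF ab] d_def by simp
        then show ?thesis using 3 j c ddum n1 n2 unfolding p_def edges_def buckets_def by auto
      next
        case 4
        then show ?thesis using ME[OF ab] unfolding p_def by (cases b) auto
      qed
    qed
    let ?t = "\<lambda>e. edge_weight m v (fst e, p (snd e)) - edge_weight m v e"
    have gd: "g \<noteq> d" using greal dnr d_def by auto
    have "(\<Sum>e\<in>M. ?t e) = (\<Sum>e\<in>{(g,(i,c)),(h,(j,c+1)),(d,(i,c'))}. ?t e)"
    proof (rule sum.mono_neutral_right[OF finM])
      show "{(g,(i,c)),(h,(j,c+1)),(d,(i,c'))} \<subseteq> M" using gM hM dM by auto
      show "\<forall>e\<in>M - {(g,(i,c)),(h,(j,c+1)),(d,(i,c'))}. ?t e = 0"
      proof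
        fix e assume e: "e \<in> M - {(g,(i,c)),(h,(j,c+1)),(d,(i,c'))}"
        obtain a b where ab: "e = (a,b)" by (cases e) blast
        have "b \<noteq> (i,c)" using e mu[of a b] g_def ab by auto
        moreover have "b \<noteq> (j,c+1)" using e mu[of a b] h_def ab by auto
        moreover have "b \<noteq> (i,c')" using e mu[of a b] d_def ab by auto
        ultimately show "?t e = 0" using ab unfolding p_def by simp
      qed
    qed
    also have "\<dots> = ?t (g,(i,c)) + ?t (h,(j,c+1)) + ?t (d,(i,c'))" using n1 n2 n3 ij by simp
    also have "\<dots> = E g * real c - E g * real c' + E h"
      using hreal greal dnr d_def n1 n2 n3 by (auto simp: p_def w_real w_dummy algebra_simps)
    finally have eq: "(\<Sum>e\<in>M. ?t e) = E g * real c - E g * real c' + E h" .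
    have "E g * real c \<ge> E g * 1" using c Epos[of g] by (intro mult_left_mono) auto
    moreover have "E g * real c' \<le> E g * real m" using c'B Epos[of g] unfolding buckets_def
      by (intro mult_left_mono) auto
    moreover have "E h \<ge> real m * E g" using Ebig greal by blast
    ultimately have "E g * real c - E g * real c' + E h > 0" using Epos[of g] by (simp only: mult.commute[of "real m"]; linarith)
    then have "\<not> max_weight_perfect_matching (edges n m val) L R (edge_weight m v) M"
      using swap_improve[OF pm finM finR injp imgp edg] eq by auto
    then show False using opt unfolding M_def L_def R_def by blast
  qed
qed

end
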